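(* Let $p>1$ and $h\in C[0,\infty)$ with $h(s)>0$ for $s>0$. Assume that the equation $w''+h(s)|w|^{p-1}w=0$ has a solution $w_0$ on $[0,\infty)$ with $w_0(0)=0$ and $w_0(s)>0$ for $s>0$. Then for all sufficiently large $c>0$ the problem \[ w''+h(s)|w|^{p-1}w=0\ (0<s<c),\quad w(0)=w(c)=0,\quad w(s)>0\ (0<s<c), \] has a solution $w_1$ with $w_1'(0)>w_0'(0)$. *)

theory Defs
  imports "HOL-Analysis.Analysis"
begin

definition emden_sol :: "real \<Rightarrow> (real \<Rightarrow> real) \<Rightarrow> real set \<Rightarrow> (real \<Rightarrow> real) \<Rightarrow> (real \<Rightarrow> real) \<Rightarrow> bool" where
  "emden_sol p h I w w' \<longleftrightarrow>
     (\<forall>s\<in>I. (w has_real_derivative w' s) (at s within I) \<and>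
            (w' has_real_derivative (- h s * (\<bar>w s\<bar> powr (p - 1) * w s))) (at s within I))"

end

theory Submission
  imports Defs
begin

definition clampM :: "real \<Rightarrow> real \<Rightarrow> real" where "clampM M x = max 0 (min M x)"
definition gf :: "real \<Rightarrow> real \<Rightarrow> real \<Rightarrow> real" where "gf p M x = (clampM M x) powr p"

lemma gf_nonneg: "0 \<le> gf p M x" by (simp add: gf_def)

lemma gf_le: assumes "M \<ge> 0" "p > 0" shows "gf p M x \<le> M powr p"
  unfolding gf_def clampM_def using assms by (intro powr_mono2) auto

lemma gf_cont: assumes "M \<ge> 0" "p > 0" shows "continuous_on UNIV (gf p M)"
  unfolding gf_def clampM_def
  by (intro continuous_on_powr' continuous_intros) (use assms in auto)

lemma gf_eq: assumes "0 \<le> x" "x \<le> M" shows "gf p M x = x powr p"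
  unfolding gf_def clampM_def using assms by simp

lemma pow_lip:
  fixes p M x y :: real
  assumes p: "p \<ge> 1" and "0 \<le> y" "y \<le> x" "x \<le> M"
  shows "x powr p - y powr p \<le> p * M powr (p-1) * (x - y)"
proof (cases "y = 0")
  case True
  have "x powr p = x powr (p-1) * x"
  proof (cases "x = 0")
    case False then show ?thesis using assms by (simp add: powr_diff)
  qed (use assms in simp)
  also have "\<dots> \<le> M powr (p-1) * x" using assms by (intro mult_right_mono powr_mono2) auto
  also have "\<dots> \<le> p * M powr (p-1) * x"
  proof -
    have "M powr (p-1) \<le> p * M powr (p-1)" using mult_right_mono[of 1 p "M powr (p-1)"] assms by simp
    thus ?thesis using assms by (intro mult_right_mono) auto
  qed
  finally show ?thesis using True assms by simp
next
  case False
  hence y0: "y > 0" using assms by auto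
  show ?thesis
  proof (cases "y = x")
    case True then show ?thesis by simp
  next
    case False
    hence yx: "y < x" using assms by auto
    have "\<exists>z. y < z \<and> z < x \<and> x powr p - y powr p = (x - y) * (p * z powr (p-1))"
      apply (rule MVT2[OF yx])
      using y0 by (auto intro!: has_real_derivative_powr)
    then obtain z where z: "y < z" "z < x" "x powr p - y powr p = (x - y) * (p * z powr (p-1))" by blast
    have "z powr (p-1) \<le> M powr (p-1)" using z assms y0 by (intro powr_mono2) auto
    hence "p * z powr (p-1) \<le> p * M powr (p-1)" using assms by auto
    thus ?thesis using z yx by (simp add: mult.commute mult_left_mono)
  qed
qed

lemma gf_lip:
  assumes p: "p \<ge> 1" and M: "M > 0"
  shows "\<bar>gf p M x - gf p M y\<bar> \<le> p * M powr (p-1) * \<bar>x - y\<bar>"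
proof -
  define X where "X = clampM M x"
  define Y where "Y = clampM M y"
  have XY: "0 \<le> X" "X \<le> M" "0 \<le> Y" "Y \<le> M" using M by (auto simp: X_def Y_def clampM_def)
  have cl: "\<bar>X - Y\<bar> \<le> \<bar>x - y\<bar>" unfolding X_def Y_def clampM_def by (auto simp: abs_if max_def min_def)
  have "\<bar>X powr p - Y powr p\<bar> \<le> p * M powr (p-1) * \<bar>X - Y\<bar>"
  proof (cases "Y \<le> X")
    case True
    have "Y powr p \<le> X powr p" using True XY p by (intro powr_mono2) auto
    then show ?thesis using pow_lip[OF p, of Y X M] XY True by (simp add: abs_if)
  next
    case False
    have "X powr p \<le> Y powr p" using False XY p by (intro powr_mono2) auto
    then show ?thesis using pow_lip[OF p, of X Y M] XY False by (auto simp: abs_if)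
  qed
  also have "\<dots> \<le> p * M powr (p-1) * \<bar>x - y\<bar>" using cl p by (intro mult_left_mono) auto
  finally show ?thesis by (simp add: gf_def X_def Y_def)
qed


lemma exp_integral:
  fixes lam r :: real assumes "lam > 0" "0 \<le> r"
  shows "integral {0..r} (\<lambda>t. exp (lam * t)) = (exp (lam * r) - 1) / lam"
proof -
  have "((\<lambda>t. exp (lam * t)) has_integral (exp (lam * r) / lam - exp (lam * 0) / lam)) {0..r}"
    apply (rule fundamental_theorem_of_calculus[OF assms(2)])
    using assms by (auto intro!: derivative_eq_intros simp: has_real_derivative_iff_has_vector_derivative[symmetric])
  thus ?thesis using assms by (simp add: integral_unique diff_divide_distrib)
qed

locale odeset =
  fixes p h c M lam H :: real and hf :: "real \<Rightarrow> real"
  assumes p1: "p > 1" and c0: "c > 0" and M0: "M > 0"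
    and hcont: "continuous_on {0..c} hf"
    and hnn: "\<And>t. t \<in> {0..c} \<Longrightarrow> 0 \<le> hf t"
    and hle: "\<And>t. t \<in> {0..c} \<Longrightarrow> hf t \<le> H"
    and lam0: "lam > 0"
    and lamH: "H * (p * M powr (p-1)) \<le> lam^2 / 2"
begin

definition "uf w t = hf t * gf p M (w t)"
definition "I1 w r = integral {0..r} (uf w)"
definition "T a w s = a * s - integral {0..s} (I1 w)"

lemma H0: "H \<ge> 0" using hnn[of 0] hle[of 0] c0 by auto

lemma uf_nonneg: "t \<in> {0..c} \<Longrightarrow> 0 \<le> uf w t"
  unfolding uf_def using hnn gf_nonneg by auto

lemma uf_le: "t \<in> {0..c} \<Longrightarrow> uf w t \<le> H * M powr p"
  unfolding uf_def using hnn[of t] hle[of t] gf_le[of M p] M0 p1 gf_nonneg[of p M "w t"]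
  by (intro mult_mono) auto

lemma uf_cont: "continuous_on {0..c} w \<Longrightarrow> continuous_on {0..c} (uf w)"
  unfolding uf_def
  by (intro continuous_intros hcont continuous_on_compose2[OF gf_cont]) (use M0 p1 in auto)

lemma I1_deriv: "continuous_on {0..c} w \<Longrightarrow> r \<in> {0..c} \<Longrightarrow>
   (I1 w has_real_derivative uf w r) (at r within {0..c})"
  unfolding I1_def by (rule integral_has_real_derivative[OF uf_cont])

lemma I1_cont: "continuous_on {0..c} w \<Longrightarrow> continuous_on {0..c} (I1 w)"
  by (rule DERIV_continuous_on[OF I1_deriv])

lemma T_deriv: "continuous_on {0..c} w \<Longrightarrow> s \<in> {0..c} \<Longrightarrow>
   (T a w has_real_derivative (a - I1 w s)) (at s within {0..c})"
proof -
  assume w: "continuous_on {0..c} w" and s: "s \<in> {0..c}"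
  have "((\<lambda>z. integral {0..z} (I1 w)) has_real_derivative I1 w s) (at s within {0..c})"
    by (rule integral_has_real_derivative[OF I1_cont[OF w] s])
  then show ?thesis unfolding T_def
    by (auto intro!: derivative_eq_intros)
qed

lemma T_cont: "continuous_on {0..c} w \<Longrightarrow> continuous_on {0..c} (T a w)"
  by (rule DERIV_continuous_on[OF T_deriv])

lemma uf_int: "continuous_on {0..c} w \<Longrightarrow> r \<in> {0..c} \<Longrightarrow> uf w integrable_on {0..r}"
  by (rule integrable_on_subinterval[OF integrable_continuous_real[OF uf_cont]]) auto

lemma I1_int: "continuous_on {0..c} w \<Longrightarrow> r \<in> {0..c} \<Longrightarrow> I1 w integrable_on {0..r}"
  by (rule integrable_on_subinterval[OF integrable_continuous_real[OF I1_cont]]) auto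

lemma I1_nonneg: "r \<in> {0..c} \<Longrightarrow> continuous_on {0..c} w \<Longrightarrow> 0 \<le> I1 w r"
  unfolding I1_def by (rule integral_nonneg[OF uf_int]) (auto intro: uf_nonneg)

lemma I1_diff: assumes "continuous_on {0..c} w" "0 \<le> x" "x \<le> y" "y \<le> c"
  shows "I1 w y - I1 w x = integral {x..y} (uf w)"
  unfolding I1_def using Henstock_Kurzweil_Integration.integral_combine[OF assms(2,3) uf_int[OF assms(1), of y]] assms by auto

lemma I1_mono: assumes "continuous_on {0..c} w" "0 \<le> x" "x \<le> y" "y \<le> c"
  shows "I1 w x \<le> I1 w y"
proof -
  have "0 \<le> integral {x..y} (uf w)"
    apply (rule integral_nonneg)
    apply (rule integrable_on_subinterval[OF integrable_continuous_real[OF uf_cont[OF assms(1)]]])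
    using assms uf_nonneg by auto
  thus ?thesis using I1_diff[OF assms] by simp
qed

lemma T_diff: assumes "continuous_on {0..c} w" "0 \<le> x" "x \<le> y" "y \<le> c"
  shows "T a w y - T a w x = a * (y - x) - integral {x..y} (I1 w)"
  unfolding T_def using Henstock_Kurzweil_Integration.integral_combine[OF assms(2,3) I1_int[OF assms(1), of y]] assms
  by (auto simp: algebra_simps)

lemma T_cong: assumes "\<And>t. t \<in> {0..c} \<Longrightarrow> w1 t = w2 t" "s \<in> {0..c}"
  shows "T a w1 s = T a w2 s"
  unfolding T_def I1_def uf_def
  by (intro arg_cong2[where f="(-)"] refl integral_cong) (use assms in auto)

lemma T_lip:
  assumes w1: "continuous_on {0..c} w1" and w2: "continuous_on {0..c} w2"
    and B: "\<And>t. t \<in> {0..c} \<Longrightarrow> \<bar>w1 t - w2 t\<bar> \<le> B * exp (lam * t)"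
    and s: "s \<in> {0..c}"
  shows "\<bar>T a w1 s - T a w2 s\<bar> \<le> B / 2 * exp (lam * s)"
proof -
  define Lg where "Lg = p * M powr (p-1)"
  have Lg0: "Lg \<ge> 0" using p1 by (simp add: Lg_def)
  have B0: "B \<ge> 0" using B[of 0] c0 by auto
  have uf_d: "\<bar>uf w1 t - uf w2 t\<bar> \<le> (H * Lg * B) * exp (lam * t)" if t: "t \<in> {0..c}" for t
  proof -
    have "\<bar>uf w1 t - uf w2 t\<bar> = hf t * \<bar>gf p M (w1 t) - gf p M (w2 t)\<bar>"
      unfolding uf_def using hnn[OF t] by (simp add: abs_mult right_diff_distrib[symmetric])
    also have "\<dots> \<le> H * (Lg * \<bar>w1 t - w2 t\<bar>)"
      unfolding Lg_def using hnn[OF t] hle[OF t] gf_lip[of p M] p1 M0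
      by (intro mult_mono) auto
    also have "\<dots> \<le> H * (Lg * (B * exp (lam * t)))"
      using B[OF t] H0 Lg0 by (intro mult_left_mono) auto
    finally show ?thesis by (simp add: algebra_simps)
  qed
  have I1_d: "\<bar>I1 w1 r - I1 w2 r\<bar> \<le> (H * Lg * B) * exp (lam * r) / lam" if r: "r \<in> {0..c}" for r
  proof -
    have "I1 w1 r - I1 w2 r = integral {0..r} (\<lambda>t. uf w1 t - uf w2 t)"
      unfolding I1_def using r by (intro integral_diff[symmetric] uf_int w1 w2) auto
    also have "\<bar>\<dots>\<bar> \<le> integral {0..r} (\<lambda>t. (H * Lg * B) * exp (lam * t))"
      using r uf_d
      by (intro integral_norm_bound_integral[where f="\<lambda>t. uf w1 t - uf w2 t", simplified]
           integrable_diff uf_int w1 w2 integrable_continuous_real continuous_intros) auto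
    also have "\<dots> = (H * Lg * B) * ((exp (lam * r) - 1) / lam)"
      using exp_integral[OF lam0, of r] r by simp
    also have "\<dots> \<le> (H * Lg * B) * (exp (lam * r) / lam)"
      using H0 Lg0 B0 lam0 by (intro mult_left_mono divide_right_mono) auto
    finally show ?thesis by simp
  qed
  have "T a w1 s - T a w2 s = - integral {0..s} (\<lambda>r. I1 w1 r - I1 w2 r)"
    unfolding T_def using s by (subst integral_diff) (auto intro: I1_int w1 w2)
  hence "\<bar>T a w1 s - T a w2 s\<bar> = \<bar>integral {0..s} (\<lambda>r. I1 w1 r - I1 w2 r)\<bar>" by simp
  also have "\<dots> \<le> integral {0..s} (\<lambda>r. (H * Lg * B / lam) * exp (lam * r))"
    using s I1_d
    by (intro integral_norm_bound_integral[where f="\<lambda>t. I1 w1 t - I1 w2 t", simplified]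
           integrable_diff I1_int w1 w2 integrable_continuous_real continuous_intros) auto
  also have "\<dots> = (H * Lg * B / lam) * ((exp (lam * s) - 1) / lam)"
    using exp_integral[OF lam0, of s] s by simp
  also have "\<dots> \<le> (H * Lg * B / lam) * (exp (lam * s) / lam)"
    using H0 Lg0 B0 lam0 by (intro mult_left_mono divide_right_mono) auto
  also have "\<dots> = (H * Lg) * B * exp (lam * s) / lam^2"
    by (simp add: power2_eq_square)
  also have "\<dots> \<le> (lam^2/2) * B * exp (lam * s) / lam^2"
    using lamH B0 unfolding Lg_def by (intro divide_right_mono mult_right_mono) auto
  also have "\<dots> = B / 2 * exp (lam * s)" using lam0 by (simp add: field_simps)
  finally show ?thesis .
qed

end


context odeset begin

definition "pc x = max 0 (min c x)"
definition "wz z t = exp (lam * t) * apply_bcontfun z t"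
definition "FF a z s = exp (- (lam * s)) * T a (wz z) s"
definition "Phi a z = Bcontfun (\<lambda>x. FF a z (pc x))"

lemma pc_in: "pc x \<in> {0..c}" using c0 by (auto simp: pc_def)
lemma pc_id: "x \<in> {0..c} \<Longrightarrow> pc x = x" by (auto simp: pc_def)
lemma pc_cont: "continuous_on UNIV pc" unfolding pc_def by (intro continuous_intros)

lemma wz_cont: "continuous_on S (wz z)" unfolding wz_def by (intro continuous_intros) auto

lemma comp_bcontfun: assumes "continuous_on {0..c} f" shows "(\<lambda>x. f (pc x)) \<in> bcontfun"
proof -
  have "continuous_on UNIV (\<lambda>x. f (pc x))"
    by (rule continuous_on_compose2[OF assms pc_cont]) (use pc_in in auto)
  moreover have "bounded (range (\<lambda>x. f (pc x)))"
    by (rule bounded_subset[OF compact_imp_bounded[OF compact_continuous_image[OF assms]]])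
       (use pc_in in auto)
  ultimately show ?thesis by (simp add: bcontfun_def)
qed

lemma FF_cont: "continuous_on {0..c} (FF a z)"
  unfolding FF_def by (intro continuous_intros T_cont wz_cont)

lemma Phi_apply: "apply_bcontfun (Phi a z) x = FF a z (pc x)"
  unfolding Phi_def by (simp add: Bcontfun_inverse[OF comp_bcontfun[OF FF_cont]])

lemma Phi_contr: "dist (Phi a z1) (Phi a z2) \<le> 1/2 * dist z1 z2"
proof (rule dist_bound)
  fix x
  define s where "s = pc x"
  have s: "s \<in> {0..c}" using pc_in by (simp add: s_def)
  have B: "\<bar>wz z1 t - wz z2 t\<bar> \<le> dist z1 z2 * exp (lam * t)" for t
  proof -
    have "\<bar>wz z1 t - wz z2 t\<bar> = exp (lam * t) * dist (apply_bcontfun z1 t) (apply_bcontfun z2 t)"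
      unfolding wz_def dist_real_def by (simp add: abs_mult right_diff_distrib[symmetric])
    also have "\<dots> \<le> exp (lam * t) * dist z1 z2" by (intro mult_left_mono dist_bounded) auto
    finally show ?thesis by (simp add: mult.commute)
  qed
  have "\<bar>T a (wz z1) s - T a (wz z2) s\<bar> \<le> dist z1 z2 / 2 * exp (lam * s)"
    by (rule T_lip[OF wz_cont wz_cont B s])
  hence "exp (- (lam * s)) * \<bar>T a (wz z1) s - T a (wz z2) s\<bar> \<le> exp (- (lam * s)) * (dist z1 z2 / 2 * exp (lam * s))"
    by (intro mult_left_mono) auto
  also have "\<dots> = dist z1 z2 / 2" by (simp add: exp_minus field_simps)
  finally show "dist (apply_bcontfun (Phi a z1) x) (apply_bcontfun (Phi a z2) x) \<le> 1/2 * dist z1 z2"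
    unfolding Phi_apply FF_def dist_real_def s_def[symmetric]
    by (simp add: abs_mult right_diff_distrib[symmetric])
qed

lemma Phi_param: "dist (Phi a z) (Phi b z) \<le> c * \<bar>a - b\<bar>"
proof (rule dist_bound)
  fix x
  define s where "s = pc x"
  have s: "s \<in> {0..c}" using pc_in by (simp add: s_def)
  have "FF a z s - FF b z s = exp (- (lam * s)) * ((a - b) * s)"
    unfolding FF_def T_def by (simp add: algebra_simps)
  hence "\<bar>FF a z s - FF b z s\<bar> = exp (- (lam * s)) * (\<bar>a - b\<bar> * s)"
    using s by (simp add: abs_mult)
  also have "\<dots> \<le> 1 * (\<bar>a - b\<bar> * c)"
    using s lam0 by (intro mult_mono mult_left_mono) auto
  finally show "dist (apply_bcontfun (Phi a z) x) (apply_bcontfun (Phi b z) x) \<le> c * \<bar>a - b\<bar>"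
    unfolding Phi_apply dist_real_def s_def[symmetric] by (simp add: mult.commute)
qed

lemma Phi_ex1: "\<exists>!z. Phi a z = z"
  by (rule banach_fix_type[of "1/2"]) (use Phi_contr in auto)

definition "fp a = (THE z. Phi a z = z)"
definition "W a = wz (fp a)"

lemma fp_fix: "Phi a (fp a) = fp a"
  unfolding fp_def by (rule theI'[OF Phi_ex1])

lemma fp_unique: "Phi a z = z \<Longrightarrow> fp a = z"
  using Phi_ex1 fp_fix by blast

lemma W_cont: "continuous_on S (W a)" unfolding W_def by (rule wz_cont)

lemma W_eq: assumes "t \<in> {0..c}" shows "W a t = T a (W a) t"
proof -
  have "apply_bcontfun (fp a) t = FF a (fp a) t"
    using Phi_apply[of a "fp a" t] fp_fix[of a] pc_id[OF assms] by simp
  thus ?thesis unfolding W_def FF_def by (simp add: wz_def exp_minus field_simps)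
qed

lemma fp_lip: "dist (fp a) (fp b) \<le> 2 * c * \<bar>a - b\<bar>"
proof -
  have "dist (fp a) (fp b) = dist (Phi a (fp a)) (Phi b (fp b))" using fp_fix by simp
  also have "\<dots> \<le> dist (Phi a (fp a)) (Phi b (fp a)) + dist (Phi b (fp a)) (Phi b (fp b))"
    by (rule dist_triangle)
  also have "\<dots> \<le> c * \<bar>a - b\<bar> + 1/2 * dist (fp a) (fp b)"
    using Phi_param Phi_contr by (intro add_mono)
  finally show ?thesis by simp
qed

lemma W_lip: assumes "t \<in> {0..c}" shows "\<bar>W a t - W b t\<bar> \<le> exp (lam * c) * (2 * c * \<bar>a - b\<bar>)"
proof -
  have "\<bar>W a t - W b t\<bar> = exp (lam * t) * dist (apply_bcontfun (fp a) t) (apply_bcontfun (fp b) t)"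
    unfolding W_def wz_def dist_real_def by (simp add: abs_mult right_diff_distrib[symmetric])
  also have "\<dots> \<le> exp (lam * c) * (2 * c * \<bar>a - b\<bar>)"
    using assms lam0 dist_bounded[of "fp a" t "fp b"] fp_lip[of a b]
    by (intro mult_mono) auto
  finally show ?thesis .
qed

lemma W_unique:
  assumes w: "continuous_on {0..c} w" and eq: "\<And>t. t \<in> {0..c} \<Longrightarrow> w t = T a w t"
    and t: "t \<in> {0..c}"
  shows "W a t = w t"
proof -
  define f where "f x = exp (- (lam * x)) * w x" for x
  have fc: "continuous_on {0..c} f" unfolding f_def by (intro continuous_intros w)
  define z0 where "z0 = Bcontfun (\<lambda>x. f (pc x))"
  have z0: "apply_bcontfun z0 x = f (pc x)" for x
    unfolding z0_def by (simp add: Bcontfun_inverse[OF comp_bcontfun[OF fc]])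
  have wz0: "wz z0 t = w t" if "t \<in> {0..c}" for t
    using that by (simp add: wz_def z0 pc_id f_def exp_minus field_simps)
  have "Phi a z0 = z0"
  proof (rule bcontfun_eqI)
    fix x
    have "T a (wz z0) (pc x) = T a w (pc x)" by (rule T_cong[OF wz0 pc_in])
    also have "\<dots> = w (pc x)" using eq[OF pc_in] by simp
    finally show "apply_bcontfun (Phi a z0) x = apply_bcontfun z0 x"
      by (simp add: Phi_apply FF_def z0 f_def)
  qed
  hence "fp a = z0" by (rule fp_unique)
  thus ?thesis unfolding W_def using wz0[OF t] by simp
qed

end


context odeset begin

definition "D a s = a - I1 (W a) s"

lemma Wc: "continuous_on {0..c} (W a)" by (rule W_cont)

lemma W_deriv: assumes "s \<in> {0..c}" shows "(W a has_real_derivative D a s) (at s within {0..c})"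
  unfolding D_def
  by (rule has_field_derivative_transform_within[OF T_deriv[OF Wc assms] zero_less_one assms])
     (simp add: W_eq)

lemma D_deriv: assumes "s \<in> {0..c}" shows "(D a has_real_derivative - uf (W a) s) (at s within {0..c})"
  unfolding D_def using I1_deriv[OF Wc assms] by (auto intro!: derivative_eq_intros)

lemma W0: "W a 0 = 0" using W_eq[of 0 a] c0 by (simp add: T_def)

lemma D0: "D a 0 = a" by (simp add: D_def I1_def)

lemma W_le: assumes "t \<in> {0..c}" shows "W a t \<le> a * t"
proof -
  have "0 \<le> integral {0..t} (I1 (W a))"
    by (rule integral_nonneg[OF I1_int[OF Wc assms]]) (use assms in \<open>auto intro: I1_nonneg Wc\<close>)
  thus ?thesis using W_eq[OF assms] by (simp add: T_def)
qed

lemma D_mono: "0 \<le> x \<Longrightarrow> x \<le> y \<Longrightarrow> y \<le> c \<Longrightarrow> D a y \<le> D a x"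
  unfolding D_def using I1_mono[OF Wc] by auto

lemma I1_int_sub: "0 \<le> x \<Longrightarrow> x \<le> y \<Longrightarrow> y \<le> c \<Longrightarrow> I1 (W a) integrable_on {x..y}"
  by (rule integrable_on_subinterval[OF integrable_continuous_real[OF I1_cont[OF Wc]]]) auto

lemma chord1: assumes "0 \<le> x" "x \<le> y" "y \<le> c"
  shows "W a y - W a x \<le> D a x * (y - x)"
proof -
  have "integral {x..y} (\<lambda>r. I1 (W a) x) \<le> integral {x..y} (I1 (W a))"
    by (rule integral_le[OF _ I1_int_sub[OF assms]]) (use assms in \<open>auto intro: I1_mono Wc\<close>)
  thus ?thesis using T_diff[OF Wc[of a] assms, of a] W_eq[of x a] W_eq[of y a] assms
    by (simp add: D_def algebra_simps)
qed

lemma chord2: assumes "0 \<le> x" "x \<le> y" "y \<le> c"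
  shows "D a y * (y - x) \<le> W a y - W a x"
proof -
  have "integral {x..y} (I1 (W a)) \<le> integral {x..y} (\<lambda>r. I1 (W a) y)"
    by (rule integral_le[OF I1_int_sub[OF assms]]) (use assms in \<open>auto intro: I1_mono Wc\<close>)
  thus ?thesis using T_diff[OF Wc[of a] assms, of a] W_eq[of x a] W_eq[of y a] assms
    by (simp add: D_def algebra_simps)
qed

lemma D_lower: assumes "s \<in> {0..c}" shows "a - s * (H * M powr p) \<le> D a s"
proof -
  have "I1 (W a) s \<le> integral {0..s} (\<lambda>t. H * M powr p)"
    unfolding I1_def by (rule integral_le[OF uf_int[OF Wc assms]]) (use assms uf_le in auto)
  moreover have "integral {0..s} (\<lambda>t. H * M powr p) = s * (H * M powr p)" using assms by simp
  ultimately show ?thesis unfolding D_def by linarith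
qed

lemma W_pos_small: assumes "a > 0" "0 < x" "x \<le> c" "x * (H * M powr p) \<le> a / 2"
  shows "a * x / 2 \<le> W a x"
proof -
  have "D a x * x \<le> W a x" using chord2[of 0 x a] assms W0 by simp
  moreover have "a / 2 \<le> D a x" using D_lower[of x a] assms by auto
  moreover have "a / 2 * x \<le> D a x * x" using \<open>a / 2 \<le> D a x\<close> assms by (intro mult_right_mono) auto
  ultimately show ?thesis by simp
qed

lemma W_neg_after: assumes "0 \<le> s1" "s1 < s0" "s0 < s" "s \<le> c" "W a s1 > 0" "W a s0 = 0"
  shows "W a s < 0"
proof -
  have "D a s0 * (s0 - s1) \<le> W a s0 - W a s1" by (rule chord2) (use assms in auto)
  hence "D a s0 * (s0 - s1) < 0" using assms by simp
  hence "D a s0 < 0" using assms by (simp add: mult_less_0_iff)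
  moreover have "W a s - W a s0 \<le> D a s0 * (s - s0)" by (rule chord1) (use assms in auto)
  moreover have "D a s0 * (s - s0) < 0" using \<open>D a s0 < 0\<close> assms by (intro mult_neg_pos) auto
  ultimately show ?thesis using assms by simp
qed

lemma uf_emden: assumes "0 \<le> W a t" "W a t \<le> M"
  shows "uf (W a) t = hf t * (\<bar>W a t\<bar> powr (p-1) * W a t)"
proof -
  have "W a t powr p = W a t powr (p-1) * W a t"
  proof (cases "W a t = 0")
    case False then show ?thesis using assms by (simp add: powr_diff)
  qed (use p1 in simp)
  thus ?thesis unfolding uf_def using gf_eq[OF assms] assms by simp
qed

end


context odeset begin

lemma concave_lower:
  assumes "0 \<le> s" "s \<le> t" "t < 2" "2 \<le> c" "W a 2 > 0" "W a t > 0"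
  shows "W a s * (2 - t) \<le> W a t * (2 - s)"
proof -
  have e1: "W a 2 - W a t \<le> D a t * (2 - t)" by (rule chord1) (use assms in auto)
  have e2: "D a t * (t - s) \<le> W a t - W a s" by (rule chord2) (use assms in auto)
  have "D a t * (2 - t) > - W a t" using e1 assms by simp
  hence "(D a t * (2 - t)) * (t - s) \<ge> (- W a t) * (t - s)"
    using assms by (intro mult_right_mono) auto
  moreover have "(W a t - W a s) * (2 - t) \<ge> (D a t * (t - s)) * (2 - t)"
    using e2 assms by (intro mult_right_mono) auto
  ultimately have "(W a t - W a s) * (2 - t) \<ge> - W a t * (t - s)" by (simp add: algebra_simps)
  thus ?thesis by (simp add: algebra_simps)
qed

lemma large_a_zero:
  assumes c2: "2 \<le> c" and m: "m > 0" "\<And>t. t \<in> {1..3/2} \<Longrightarrow> m \<le> hf t"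
    and H2: "\<And>t. t \<in> {0..1} \<Longrightarrow> hf t \<le> H2" "H2 \<ge> 0"
    and a: "a > 0" "2 * a \<le> M" and s: "0 < s" "s \<le> 1"
    and k1: "H2 * a powr (p-1) * s powr (p+1) \<le> 1/2"
    and k2: "8 * a < m * (a * s / 8) powr p"
  shows "\<exists>t. 0 < t \<and> t \<le> 2 \<and> W a t \<le> 0"
proof (rule ccontr)
  assume "\<not> ?thesis"
  hence pos: "\<And>t. 0 < t \<Longrightarrow> t \<le> 2 \<Longrightarrow> W a t > 0" by force
  define w where "w = W a"
  have wb: "0 \<le> w t \<and> w t \<le> a * t \<and> w t \<le> M" if "t \<in> {0..2}" for t
  proof -
    have h1: "0 \<le> w t" using pos[of t] that W0[of a] unfolding w_def by (cases "t = 0") auto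
    have h2: "w t \<le> a * t" using W_le[of t a] that c2 unfolding w_def by auto
    have h3: "a * t \<le> 2 * a" using that a by auto
    from h1 h2 h3 a(2) show ?thesis by linarith
  qed
  have ufw: "uf w t = hf t * w t powr p" if "t \<in> {0..2}" for t
    unfolding uf_def using gf_eq[of "w t" M p] wb[OF that] by simp
  have pp: "p > 0" using p1 by simp
  have I1s: "I1 w s \<le> integral {0..s} (\<lambda>t. H2 * (a * s) powr p)"
    unfolding I1_def
  proof (rule integral_le[OF uf_int])
    show "continuous_on {0..c} w" unfolding w_def by (rule Wc)
    show "s \<in> {0..c}" using s c2 by auto
    fix t assume t: "t \<in> {0..s}"
    have t2: "t \<in> {0..2}" using t s by auto
    have "w t powr p \<le> (a * s) powr p"
      using wb[OF t2] t a pp by (intro powr_mono2) (auto intro: order.trans[OF _ mult_left_mono[of t s a]])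
    moreover have "hf t \<le> H2" using H2 t s by auto
    moreover have "0 \<le> hf t" using hnn[of t] t s c2 by auto
    ultimately show "uf w t \<le> H2 * (a * s) powr p" using ufw[OF t2] H2
      by (simp add: mult_mono)
  qed auto
  have "s * (H2 * (a * s) powr p) = a * (H2 * a powr (p-1) * s powr (p+1))"
  proof -
    have "(a * s) powr p = a powr p * s powr p" using a s by (simp add: powr_mult)
    moreover have "a powr p = a powr (p-1) * a" using a by (simp add: powr_diff)
    moreover have "s powr (p+1) = s powr p * s" using s by (simp add: powr_add)
    ultimately show ?thesis by (simp add: algebra_simps)
  qed
  also have "\<dots> \<le> a * (1/2)" using k1 a by (intro mult_left_mono) auto
  finally have fs: "s * (H2 * (a * s) powr p) \<le> a * (1/2)" .
  have "integral {0..s} (\<lambda>t. H2 * (a * s) powr p) = s * (H2 * (a * s) powr p)" using s by simp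
  hence "I1 w s \<le> a / 2" using I1s fs by linarith
  hence Ds: "a / 2 \<le> D a s" unfolding D_def w_def by simp
  have "D a s * s \<le> W a s" using chord2[of 0 s a] s c2 W0 by simp
  moreover have "a / 2 * s \<le> D a s * s" using Ds s by (intro mult_right_mono) auto
  ultimately have ws: "a * s / 2 \<le> w s" unfolding w_def by simp
  have w2: "w 2 > 0" using pos by (simp add: w_def)
  have Lb: "a * s / 8 \<le> w t" if t: "t \<in> {1..3/2}" for t
  proof -
    have wt: "w t > 0" using pos[of t] t by (auto simp: w_def)
    have f1: "w s * (2 - t) \<le> w t * (2 - s)"
      unfolding w_def by (rule concave_lower) (use t s c2 w2 wt w_def in auto)
    have "0 < a * s" using a s by simp
    hence "0 \<le> w s" using ws by linarith
    hence f2: "w s * (1/2) \<le> w s * (2 - t)" using t by (intro mult_left_mono) auto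
    have f3: "w t * (2 - s) \<le> w t * 2" using wt s by (intro mult_left_mono) auto
    from f1 f2 f3 ws show ?thesis by linarith
  qed
  define L where "L = a * s / 8"
  have L0: "L > 0" using a s by (simp add: L_def)
  have ufL: "m * L powr p \<le> uf w t" if t: "t \<in> {1..3/2}" for t
  proof -
    have t2: "t \<in> {0..2}" using t by auto
    have "L powr p \<le> w t powr p" using Lb[OF t] L0 pp unfolding L_def by (intro powr_mono2) auto
    thus ?thesis using ufw[OF t2] m(2)[OF t] m(1)
      by (simp add: mult_mono)
  qed
  have wc: "continuous_on {0..c} w" unfolding w_def by (rule Wc)
  have "integral {1..3/2::real} (\<lambda>t. m * L powr p) \<le> integral {1..3/2} (uf w)"
  proof (rule integral_le)
    show "(\<lambda>t. m * L powr p) integrable_on {1..3/2::real}"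
      by (rule integrable_continuous_real) (rule continuous_on_const)
    show "uf w integrable_on {1..3/2::real}"
      by (rule integrable_on_subinterval[OF integrable_continuous_real[OF uf_cont[OF wc]]]) (use c2 in auto)
    show "\<And>x. x \<in> {1..3/2::real} \<Longrightarrow> m * L powr p \<le> uf w x" by (rule ufL)
  qed
  hence "m * L powr p / 2 \<le> I1 w (3/2) - I1 w 1"
    using I1_diff[OF wc, of 1 "3/2"] c2 by simp
  hence big: "4 * a < I1 w (3/2) - I1 w 1" using k2 unfolding L_def by simp
  have D1: "D a 1 \<le> a" unfolding D_def using I1_nonneg[of 1 "W a"] c2 Wc by auto
  have "w 2 - w (3/2) \<le> D a (3/2) * (2 - 3/2)" unfolding w_def by (rule chord1) (use c2 in auto)
  moreover have "w (3/2) \<le> a * (3/2)" using wb[of "3/2"] by auto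
  ultimately have D32: "- 3 * a < D a (3/2)" using w2 by simp
  have "D a 1 - D a (3/2) = I1 w (3/2) - I1 w 1" unfolding D_def w_def by simp
  thus False using big D1 D32 by simp
qed

end


context odeset begin

lemma openness:
  assumes b: "b > 0" and pos: "\<And>t. 0 < t \<Longrightarrow> t \<le> c \<Longrightarrow> W b t > 0"
  shows "\<exists>e>0. \<forall>a. b \<le> a \<and> a \<le> b + e \<longrightarrow> (\<forall>t. 0 < t \<and> t \<le> c \<longrightarrow> W a t > 0)"
proof -
  define U where "U = H * M powr p"
  have U0: "U \<ge> 0" using H0 by (simp add: U_def)
  define d where "d = min c (b / (2 * (U + 1)))"
  have d0: "d > 0" using c0 b U0 by (simp add: d_def)
  have dc: "d \<le> c" by (simp add: d_def)
  have dU: "d * U \<le> b / 2"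
  proof -
    have "d * U \<le> (b / (2 * (U + 1))) * U" using U0 by (intro mult_right_mono) (auto simp: d_def)
    also have "\<dots> \<le> (b / (2 * (U + 1))) * (U + 1)" using b U0 by (intro mult_left_mono) auto
    also have "\<dots> = b / 2" using U0 by (simp add: field_simps)
    finally show ?thesis .
  qed
  obtain x where x: "x \<in> {d..c}" "\<And>y. y \<in> {d..c} \<Longrightarrow> W b x \<le> W b y"
    using continuous_attains_inf[of "{d..c}" "W b"] dc W_cont by auto
  define mn where "mn = W b x"
  have mn0: "mn > 0" unfolding mn_def using pos[of x] x d0 by auto
  define K where "K = exp (lam * c) * (2 * c)"
  have K0: "K > 0" using c0 by (simp add: K_def)
  define e where "e = mn / (2 * K)"
  have e0: "e > 0" using mn0 K0 by (simp add: e_def)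
  have "\<forall>a. b \<le> a \<and> a \<le> b + e \<longrightarrow> (\<forall>t. 0 < t \<and> t \<le> c \<longrightarrow> W a t > 0)"
  proof (intro allI impI)
    fix a t assume a: "b \<le> a \<and> a \<le> b + e" and t: "0 < t \<and> t \<le> c"
    show "W a t > 0"
    proof (cases "t \<le> d")
      case True
      have "t * U \<le> d * U" using True U0 by (intro mult_right_mono) auto
      hence "t * U \<le> a / 2" using dU a by simp
      hence "a * t / 2 \<le> W a t" using W_pos_small[of a t] a b t unfolding U_def by auto
      moreover have "0 < a * t" using a b t by simp
      ultimately show ?thesis by simp
    next
      case False
      have "W b t \<ge> mn" unfolding mn_def using x False t by auto
      moreover have "\<bar>W a t - W b t\<bar> \<le> K * \<bar>a - b\<bar>" using W_lip[of t a b] t by (simp add: K_def)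
      moreover have "K * \<bar>a - b\<bar> \<le> K * e" using a K0 by (intro mult_left_mono) auto
      moreover have "K * e = mn / 2" using K0 by (simp add: e_def)
      ultimately show ?thesis using mn0 by linarith
    qed
  qed
  thus ?thesis using e0 by blast
qed

end


lemma choose_A:
  fixes p m H2 a0 :: real assumes p: "p > 1" and m: "m > 0" and H2: "H2 > 0" and a0: "a0 > 0"
  shows "\<exists>A s. A > a0 \<and> 0 < s \<and> s \<le> 1 \<and> H2 * A powr (p-1) * s powr (p+1) \<le> 1/2 \<and>
     8 * A < m * (A * s / 8) powr p"
proof -
  define k where "k = 1 / (2 * H2)"
  have k0: "k > 0" using H2 by (simp add: k_def)
  define s where "s = min 1 (min (m * k / (2 * 8 powr (p+1))) (k / (a0+1) powr (p-1)))"
  have s0: "s > 0" using m k0 a0 by (simp add: s_def)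
  have s1: "s \<le> 1" by (simp add: s_def)
  have s2: "s \<le> m * k / (2 * 8 powr (p+1))" by (simp add: s_def)
  have s3: "s \<le> k / (a0+1) powr (p-1)" by (simp add: s_def)
  define X where "X = k * s powr (-(p+1))"
  have X0: "X > 0" using k0 s0 by (simp add: X_def)
  define A where "A = X powr (1/(p-1))"
  have A0: "A > 0" using X0 by (simp add: A_def)
  have hA: "A powr (p-1) = X" using p X0 by (simp add: A_def powr_powr)
  have f4: "X * s powr (p+1) = k"
  proof -
    have "s powr (-(p+1)) * s powr (p+1) = s powr (-(p+1) + (p+1))" by (simp only: powr_add)
    also have "\<dots> = 1" using s0 by simp
    finally have "s powr (-(p+1)) * s powr (p+1) = 1" .
    thus ?thesis by (simp add: X_def mult.assoc)
  qed
  have k1: "H2 * A powr (p-1) * s powr (p+1) \<le> 1/2"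
  proof -
    have "H2 * A powr (p-1) * s powr (p+1) = H2 * (X * s powr (p+1))" using hA by (simp add: mult.assoc)
    also have "\<dots> = 1/2" using f4 H2 by (simp add: k_def)
    finally show ?thesis by simp
  qed
  have "X \<ge> k * s powr (-1)"
    unfolding X_def using k0 s0 s1 p by (intro mult_left_mono powr_mono') auto
  also have "k * s powr (-1) = k / s" using s0 by (simp add: powr_minus divide_inverse)
  also have "k / s \<ge> (a0+1) powr (p-1)"
  proof -
    have "(a0+1) powr (p-1) > 0" using a0 by simp
    hence "s * (a0+1) powr (p-1) \<le> k" using s3 by (simp add: field_simps)
    thus ?thesis using s0 by (simp add: field_simps)
  qed
  finally have "(a0+1) powr (p-1) \<le> A powr (p-1)" using hA by simp
  hence Aa: "A \<ge> a0 + 1"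
    using powr_less_mono2[of "p-1" A "a0+1"] p A0 by (cases "A < a0 + 1") auto
  have f1: "A powr p = X * A" using A0 hA by (simp add: powr_diff field_simps)
  have f2: "s powr p = s powr (p+1) / s" using s0 by (simp add: powr_add)
  have f3: "(8::real) powr p = 8 powr (p+1) / 8" by (simp add: powr_add)
  have f5: "(A * s / 8) powr p = A powr p * s powr p / 8 powr p"
    using A0 s0 by (simp add: powr_mult powr_divide)
  have e8: "(8::real) powr (p+1) > 0" by simp
  have eq: "m * (A * s / 8) powr p = (m * k / (s * 8 powr (p+1))) * 8 * A"
    unfolding f5 f1 f2 f3 using f4 s0 e8 by (simp add: field_simps)
  have "s * 8 powr (p+1) \<le> m * k / 2" using s2 e8 by (simp add: field_simps)
  hence "2 \<le> m * k / (s * 8 powr (p+1))" using s0 e8 m k0 by (simp add: field_simps)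
  hence "2 * (8 * A) \<le> (m * k / (s * 8 powr (p+1))) * (8 * A)" using A0 by (intro mult_right_mono) auto
  hence "8 * A < m * (A * s / 8) powr p" unfolding eq using A0 by simp
  thus ?thesis using k1 Aa s0 s1 a0 by (intro exI[of _ A] exI[of _ s]) auto
qed


lemma w0_facts:
  fixes p :: real and h w0 w0' :: "real \<Rightarrow> real"
  assumes p: "p > 1" and hc: "continuous_on {0..} h" and hpos': "\<forall>s>0. h s > 0"
    and sol: "emden_sol p h {0..} w0 w0'" and w00: "w0 0 = 0" and wpos': "\<forall>s>0. w0 s > 0"
  shows "\<And>s. 0 \<le> s \<Longrightarrow> 0 \<le> h s" and "w0' 0 > 0"
   and "\<And>r. 0 \<le> r \<Longrightarrow> w0' r = w0' 0 - integral {0..r} (\<lambda>s. h s * w0 s powr p)"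
   and "\<And>t. 0 \<le> t \<Longrightarrow> w0 t \<le> w0' 0 * t"
   and "continuous_on {0..} w0"
   and "\<And>t. 0 \<le> t \<Longrightarrow> w0 t = integral {0..t} w0'"
   and "continuous_on {0..} w0'"
proof -
  have hpos: "\<And>s. s > 0 \<Longrightarrow> h s > 0" using hpos' by blast
  have wpos: "\<And>s. s > 0 \<Longrightarrow> w0 s > 0" using wpos' by blast
  have d1: "(w0 has_real_derivative w0' s) (at s within {0..})" if "0 \<le> s" for s
    using sol that unfolding emden_sol_def by auto
  have d2: "(w0' has_real_derivative (- h s * (\<bar>w0 s\<bar> powr (p - 1) * w0 s))) (at s within {0..})"
    if "0 \<le> s" for s
    using sol that unfolding emden_sol_def by auto
  have w0nn: "0 \<le> w0 s" if "0 \<le> s" for s using wpos[of s] w00 that by (cases "s = 0") auto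
  have eqv: "\<bar>w0 s\<bar> powr (p-1) * w0 s = w0 s powr p" if "0 \<le> s" for s
  proof (cases "w0 s = 0")
    case False then show ?thesis using w0nn[OF that] by (simp add: powr_diff field_simps)
  qed (use p in simp)
  show cw0: "continuous_on {0..} w0" by (rule DERIV_continuous_on[OF d1]) auto
  show cw0': "continuous_on {0..} w0'" by (rule DERIV_continuous_on[OF d2]) auto
  show h0: "0 \<le> h s" if "0 \<le> s" for s
  proof -
    have cl: "closure {0<..} = {0::real..}" by simp
    show ?thesis
    proof (rule continuous_ge_on_closure[of "{0<..}" h s 0])
      show "continuous_on (closure {0<..}) h" unfolding cl by (rule hc)
      show "s \<in> closure {0<..}" unfolding cl using that by simp
      fix x :: real assume "x \<in> {0<..}"
      then show "0 \<le> h x" using hpos[of x] by simp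
    qed
  qed
  define v where "v s = h s * w0 s powr p" for s
  have cv: "continuous_on {0..} v" unfolding v_def
  proof (rule continuous_on_mult[OF hc])
    show "continuous_on {0..} (\<lambda>x. w0 x powr p)"
      by (rule continuous_on_powr'[OF cw0 continuous_on_const]) (use w0nn p in auto)
  qed
  have vnn: "0 \<le> v s" if "0 \<le> s" for s using h0[OF that] by (simp add: v_def)
  have vint: "v integrable_on {0..r}" if "0 \<le> r" for r
    by (rule integrable_continuous_real, rule continuous_on_subset[OF cv]) auto
  have E1: "w0' r = w0' 0 - integral {0..r} v" if r: "0 \<le> r" for r
  proof -
    have "((\<lambda>x. - v x) has_integral (w0' r - w0' 0)) {0..r}"
    proof (rule fundamental_theorem_of_calculus[OF r])
      fix x assume x: "x \<in> {0..r}"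
      have "(w0' has_real_derivative (- v x)) (at x within {0..})"
        using d2[of x] eqv[of x] x by (simp add: v_def)
      hence "(w0' has_real_derivative (- v x)) (at x within {0..r})"
        by (rule has_field_derivative_subset) auto
      thus "(w0' has_vector_derivative (- v x)) (at x within {0..r})"
        by (simp add: has_real_derivative_iff_has_vector_derivative)
    qed
    hence "integral {0..r} (\<lambda>x. - v x) = w0' r - w0' 0" by (rule integral_unique)
    thus ?thesis by simp
  qed
  show "w0' r = w0' 0 - integral {0..r} (\<lambda>s. h s * w0 s powr p)" if "0 \<le> r" for r
    using E1[OF that] by (simp add: v_def[abs_def])
  have E2: "w0' r \<le> w0' 0" if "0 \<le> r" for r
  proof -
    have "0 \<le> integral {0..r} v" by (rule integral_nonneg[OF vint[OF that]]) (use vnn in auto)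
    thus ?thesis using E1[OF that] by linarith
  qed
  have E3: "w0 t = integral {0..t} w0'" if t: "0 \<le> t" for t
  proof -
    have "(w0' has_integral (w0 t - w0 0)) {0..t}"
    proof (rule fundamental_theorem_of_calculus[OF t])
      fix x assume x: "x \<in> {0..t}"
      have "(w0 has_real_derivative w0' x) (at x within {0..t})"
        by (rule has_field_derivative_subset[OF d1]) (use x in auto)
      thus "(w0 has_vector_derivative w0' x) (at x within {0..t})"
        by (simp add: has_real_derivative_iff_has_vector_derivative)
    qed
    thus ?thesis using w00 by (simp add: integral_unique)
  qed
  show "w0 t = integral {0..t} w0'" if "0 \<le> t" for t using E3[OF that] .
  have E4: "w0 t \<le> w0' 0 * t" if t: "0 \<le> t" for t
  proof -
    have "integral {0..t} w0' \<le> integral {0..t} (\<lambda>x. w0' 0)"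
      by (rule integral_le) (auto intro!: integrable_continuous_real continuous_on_subset[OF cw0'] E2)
    thus ?thesis using E3[OF t] t by (simp add: mult.commute)
  qed
  show "w0 t \<le> w0' 0 * t" if "0 \<le> t" for t using E4[OF that] .
  show "w0' 0 > 0" using E4[of 1] wpos[of 1] by simp
qed


theorem lemma2p6:
  fixes p :: real and h w0 w0' :: "real \<Rightarrow> real"
  assumes "p > 1"
    and "continuous_on {0..} h"
    and "\<And>s. s > 0 \<Longrightarrow> h s > 0"
    and "emden_sol p h {0..} w0 w0'"
    and "w0 0 = 0"
    and "\<And>s. s > 0 \<Longrightarrow> w0 s > 0"
  shows "\<exists>C>0. \<forall>c\<ge>C. \<exists>w1 w1'. emden_sol p h {0..c} w1 w1' \<and>
           w1 0 = 0 \<and> w1 c = 0 \<and> (\<forall>s. 0 < s \<and> s < c \<longrightarrow> w1 s > 0) \<and>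
           w1' 0 > w0' 0"
proof -
  have hpos': "\<forall>s>0. h s > 0" using assms(3) by blast
  have wpos': "\<forall>s>0. w0 s > 0" using assms(6) by blast
  note F = w0_facts[of p h w0 w0', OF assms(1) assms(2) hpos' assms(4) assms(5) wpos']
  have p1: "p > 1" by (rule assms(1))
  define a0 where "a0 = w0' 0"
  have a0: "a0 > 0" using F(2) by (simp add: a0_def)
  have hsub: "continuous_on S h" if "S \<subseteq> {0..}" for S
    by (rule continuous_on_subset[OF assms(2) that])
  obtain x1 where x1: "x1 \<in> {1..3/2::real}" "\<And>y. y \<in> {1..3/2} \<Longrightarrow> h x1 \<le> h y"
    using continuous_attains_inf[of "{1..3/2::real}" h] hsub[of "{1..3/2}"] by auto
  define m where "m = h x1"
  have m: "m > 0" "\<And>t. t \<in> {1..3/2} \<Longrightarrow> m \<le> h t"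
    using x1 assms(3)[of x1] by (auto simp: m_def)
  obtain x2 where x2: "x2 \<in> {0..1::real}" "\<And>y. y \<in> {0..1} \<Longrightarrow> h y \<le> h x2"
    using continuous_attains_sup[of "{0..1::real}" h] hsub[of "{0..1}"] by auto
  define H2 where "H2 = h x2 + 1"
  have H2: "H2 > 0" "\<And>t. t \<in> {0..1} \<Longrightarrow> h t \<le> H2"
  proof -
    show "H2 > 0" using x2 F(1)[of x2] by (simp add: H2_def)
    fix t :: real assume "t \<in> {0..1}"
    then have "h t \<le> h x2" by (rule x2(2))
    then show "h t \<le> H2" by (simp add: H2_def)
  qed
  obtain A s where As: "A > a0" "0 < s" "s \<le> 1" "H2 * A powr (p-1) * s powr (p+1) \<le> 1/2"
     "8 * A < m * (A * s / 8) powr p"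
    using choose_A[OF p1 m(1) H2(1) a0] by blast
  show ?thesis
  proof (intro exI[of _ 2] conjI allI impI)
    show "(0::real) < 2" by simp
    fix c :: real assume c2: "2 \<le> c"
    have c0: "c > 0" using c2 by simp
    define M where "M = A * c + 1"
    have M0: "M > 0" using As(1) a0 c0 by (simp add: M_def add_pos_nonneg)
    have AcM: "A * c < M" by (simp add: M_def)
    obtain x3 where x3: "x3 \<in> {0..c}" "\<And>y. y \<in> {0..c} \<Longrightarrow> h y \<le> h x3"
      using continuous_attains_sup[of "{0..c}" h] hsub[of "{0..c}"] c0 by auto
    define Hc where "Hc = h x3"
    define Lg where "Lg = p * M powr (p-1)"
    have Lg0: "Lg \<ge> 0" using p1 by (simp add: Lg_def)
    have Hc0: "Hc \<ge> 0" using F(1)[of x3] x3 by (simp add: Hc_def)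
    define lam where "lam = sqrt (2 * Hc * Lg + 1)"
    have lam0: "lam > 0" using Hc0 Lg0 by (simp add: lam_def add_nonneg_pos)
    have lam2: "lam^2 = 2 * Hc * Lg + 1" using Hc0 Lg0 by (simp add: lam_def)
    interpret E: odeset p 0 c M lam Hc h
    proof
      show "p > 1" by (rule p1)
      show "c > 0" by (rule c0)
      show "M > 0" by (rule M0)
      show "continuous_on {0..c} h" by (rule hsub) auto
      show "\<And>t. t \<in> {0..c} \<Longrightarrow> 0 \<le> h t" using F(1) by simp
      show "\<And>t. t \<in> {0..c} \<Longrightarrow> h t \<le> Hc" using x3 by (simp add: Hc_def)
      show "lam > 0" by (rule lam0)
      show "Hc * (p * M powr (p - 1)) \<le> lam\<^sup>2 / 2" using lam2 by (simp add: Lg_def)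
    qed
    have w0le: "w0 t \<le> a0 * t" if "0 \<le> t" for t using F(4)[OF that] by (simp add: a0_def)
    have w0nn: "0 \<le> w0 t" if "0 \<le> t" for t using assms(6)[of t] assms(5) that by (cases "t = 0") auto
    have w0M: "w0 t \<le> M" if "t \<in> {0..c}" for t
    proof -
      have "a0 * t \<le> A * c" using that As(1) a0 by (intro mult_mono) auto
      thus ?thesis using w0le[of t] that AcM by simp
    qed
    have cw0: "continuous_on {0..c} w0" by (rule continuous_on_subset[OF F(5)]) auto
    have cw0': "continuous_on {0..c} w0'" by (rule continuous_on_subset[OF F(7)]) auto
    have I1w0: "E.I1 w0 r = a0 - w0' r" if r: "r \<in> {0..c}" for r
    proof -
      have "E.I1 w0 r = integral {0..r} (\<lambda>s. h s * w0 s powr p)"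
        unfolding E.I1_def E.uf_def
      proof (rule integral_cong)
        fix x assume "x \<in> {0..r}"
        hence x: "x \<in> {0..c}" using r by auto
        show "h x * gf p M (w0 x) = h x * w0 x powr p" using gf_eq[OF w0nn w0M[OF x]] x by simp
      qed
      thus ?thesis using F(3)[of r] r by (simp add: a0_def)
    qed
    have Tw0: "w0 t = E.T a0 w0 t" if t: "t \<in> {0..c}" for t
    proof -
      have "integral {0..t} (E.I1 w0) = integral {0..t} (\<lambda>r. a0 - w0' r)"
        by (rule integral_cong) (use t I1w0 in auto)
      also have "\<dots> = integral {0..t} (\<lambda>r. a0) - integral {0..t} w0'"
        by (rule integral_diff)
           (use t in \<open>auto intro!: integrable_continuous_real continuous_on_subset[OF cw0']\<close>)
      also have "\<dots> = a0 * t - w0 t" using F(6)[of t] t by (simp add: mult.commute)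
      finally show ?thesis unfolding E.T_def by simp
    qed
    have Wa0: "E.W a0 t = w0 t" if "t \<in> {0..c}" for t
      by (rule E.W_unique[OF cw0 Tw0 that])
    define S where "S = {a. a0 \<le> a \<and> a \<le> A \<and> (\<forall>t. 0 < t \<and> t \<le> c \<longrightarrow> E.W a t > 0)}"
    have a0S: "a0 \<in> S" unfolding S_def using As(1) Wa0 assms(6) by auto
    have AnS: "A \<notin> S"
    proof
      assume AS: "A \<in> S"
      have "\<exists>t. 0 < t \<and> t \<le> 2 \<and> E.W A t \<le> 0"
      proof (rule E.large_a_zero[OF c2 m(1) m(2) H2(2) _ _ _ As(2) As(3) As(4) As(5)])
        show "0 \<le> H2" using H2 by simp
        show "A > 0" using As(1) a0 by simp
        have "A * 2 \<le> A * c" using c2 As(1) a0 by (intro mult_left_mono) auto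
        thus "2 * A \<le> M" unfolding M_def by simp
      qed
      then obtain t where "0 < t" "t \<le> 2" "E.W A t \<le> 0" by blast
      thus False using AS c2 unfolding S_def by force
    qed
    have bdd: "bdd_above S" unfolding S_def by (rule bdd_aboveI[of _ A]) auto
    have Sne: "S \<noteq> {}" using a0S by blast
    define a1 where "a1 = Sup S"
    have a1A: "a1 \<le> A" unfolding a1_def by (rule cSup_least[OF Sne]) (auto simp: S_def)
    have a1S: "a \<le> a1" if "a \<in> S" for a unfolding a1_def by (rule cSup_upper[OF that bdd])
    have a1a0: "a1 > a0"
    proof -
      obtain e where e: "e > 0" "\<forall>a. a0 \<le> a \<and> a \<le> a0 + e \<longrightarrow> (\<forall>t. 0 < t \<and> t \<le> c \<longrightarrow> E.W a t > 0)"
        using E.openness[OF a0, of] Wa0 assms(6) by force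
      define a' where "a' = a0 + min e ((A - a0) / 2)"
      have a'1: "a0 < a'" "a' \<le> a0 + e" "a' \<le> A" 
      proof -
        have m1: "min e ((A - a0) / 2) > 0" using e(1) As(1) by auto
        have m2: "min e ((A - a0) / 2) \<le> e" by (rule min.cobounded1)
        have m3: "min e ((A - a0) / 2) \<le> (A - a0) / 2" by (rule min.cobounded2)
        show "a0 < a'" unfolding a'_def using m1 by linarith
        show "a' \<le> a0 + e" unfolding a'_def using m2 by linarith
        have "(A - a0) / 2 < A - a0" using As(1) by simp
        then show "a' \<le> A" unfolding a'_def using m3 by linarith
      qed
      have "\<forall>t. 0 < t \<and> t \<le> c \<longrightarrow> 0 < E.W a' t" using e(2) a'1 by auto
      hence "a' \<in> S" unfolding S_def using a'1 by auto
      hence "a' \<le> a1" by (rule a1S)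
      moreover have "a' > a0" by (rule a'1(1))
      ultimately show ?thesis by simp
    qed
    have a1pos: "a1 > 0" using a1a0 a0 by simp
    define K where "K = exp (lam * c) * (2 * c)"
    have K0: "K > 0" using c0 by (simp add: K_def)
    have nonneg: "0 \<le> E.W a1 t" if t: "t \<in> {0..c}" for t
    proof (rule ccontr)
      assume "\<not> 0 \<le> E.W a1 t"
      hence neg: "E.W a1 t < 0" by simp
      have tpos: "t > 0" using neg E.W0[of a1] t by (cases "t = 0") auto
      define eta where "eta = - E.W a1 t / (2 * K)"
      have eta0: "eta > 0" using divide_neg_pos[of "E.W a1 t" "2 * K"] neg K0 by (simp add: eta_def)
      have "a1 - eta < Sup S" using eta0 by (simp add: a1_def)
      then obtain a where aS: "a \<in> S" and aeta: "a1 - eta < a" using less_cSup_iff[OF Sne bdd] by blast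
      have aa1: "a \<le> a1" using a1S[OF aS] .
      have "\<bar>E.W a t - E.W a1 t\<bar> \<le> K * \<bar>a - a1\<bar>" using E.W_lip[OF t, of a a1] by (simp add: K_def)
      moreover have "K * \<bar>a - a1\<bar> \<le> K * eta" using aa1 aeta K0 by (intro mult_left_mono) auto
      moreover have "K * eta = - E.W a1 t / 2" using K0 by (simp add: eta_def)
      ultimately have "E.W a t < 0" using neg by linarith
      moreover have "E.W a t > 0" using aS tpos t unfolding S_def by auto
      ultimately show False by simp
    qed
    have posin: "0 < E.W a1 t" if t: "0 < t" "t < c" for t
    proof (rule ccontr)
      assume "\<not> 0 < E.W a1 t"
      hence z: "E.W a1 t = 0" using nonneg[of t] t by simp
      define U where "U = Hc * M powr p"
      have U0: "U \<ge> 0" using Hc0 by (simp add: U_def)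
      define s1 where "s1 = min (t/2) (a1 / (2 * (U + 1)))"
      have s10: "s1 > 0" using t a1pos U0 by (simp add: s1_def)
      have s1t: "s1 < t" using t by (simp add: s1_def)
      have "s1 * U \<le> (a1 / (2 * (U + 1))) * U" using U0 by (intro mult_right_mono) (auto simp: s1_def)
      also have "\<dots> \<le> (a1 / (2 * (U + 1))) * (U + 1)" using a1pos U0 by (intro mult_left_mono) auto
      also have "\<dots> = a1 / 2" using U0 by (simp add: field_simps)
      finally have "s1 * U \<le> a1 / 2" .
      hence "a1 * s1 / 2 \<le> E.W a1 s1"
        using E.W_pos_small[of a1 s1] a1pos s10 s1t t unfolding U_def by simp
      moreover have "0 < a1 * s1" using a1pos s10 by simp
      ultimately have "E.W a1 s1 > 0" by simp
      hence "E.W a1 c < 0" using E.W_neg_after[of s1 t c a1] s10 s1t t z by simp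
      thus False using nonneg[of c] c0 by simp
    qed
    have Wc: "E.W a1 c = 0"
    proof (rule ccontr)
      assume "E.W a1 c \<noteq> 0"
      hence Wcp: "E.W a1 c > 0" using nonneg[of c] c0 by simp
      have posc: "\<And>t. 0 < t \<Longrightarrow> t \<le> c \<Longrightarrow> E.W a1 t > 0"
        using posin Wcp by (metis order_le_less)
      have "a1 \<in> S" unfolding S_def using a1a0 a1A posc by auto
      hence a1lt: "a1 < A" using AnS a1A by (cases "a1 = A") auto
      obtain e where e: "e > 0" "\<forall>a. a1 \<le> a \<and> a \<le> a1 + e \<longrightarrow> (\<forall>t. 0 < t \<and> t \<le> c \<longrightarrow> E.W a t > 0)"
        using E.openness[OF a1pos posc] by blast
      define a' where "a' = a1 + min e ((A - a1) / 2)"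
      have a'1: "a1 < a'" "a' \<le> a1 + e" "a' \<le> A" 
      proof -
        have m1: "min e ((A - a1) / 2) > 0" using e(1) a1lt by auto
        have m2: "min e ((A - a1) / 2) \<le> e" by (rule min.cobounded1)
        have m3: "min e ((A - a1) / 2) \<le> (A - a1) / 2" by (rule min.cobounded2)
        show "a1 < a'" unfolding a'_def using m1 by linarith
        show "a' \<le> a1 + e" unfolding a'_def using m2 by linarith
        have "(A - a1) / 2 < A - a1" using a1lt by simp
        then show "a' \<le> A" unfolding a'_def using m3 by linarith
      qed
      have "\<forall>t. 0 < t \<and> t \<le> c \<longrightarrow> 0 < E.W a' t" using e(2) a'1 by auto
      hence "a' \<in> S" unfolding S_def using a'1 a1a0 by auto
      hence "a' \<le> a1" by (rule a1S)
      moreover have "a' > a1" by (rule a'1(1))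
      ultimately show False by simp
    qed
    have WM: "E.W a1 t \<le> M" if "t \<in> {0..c}" for t
    proof -
      have "a1 * t \<le> A * c" using that a1A a1pos by (intro mult_mono) auto
      thus ?thesis using E.W_le[OF that, of a1] AcM by simp
    qed
    have sol: "emden_sol p h {0..c} (E.W a1) (E.D a1)"
      unfolding emden_sol_def
    proof (intro ballI conjI)
      fix s assume s: "s \<in> {0..c}"
      show "(E.W a1 has_real_derivative E.D a1 s) (at s within {0..c})" by (rule E.W_deriv[OF s])
      have "E.uf (E.W a1) s = h s * (\<bar>E.W a1 s\<bar> powr (p - 1) * E.W a1 s)"
        by (rule E.uf_emden[OF nonneg[OF s] WM[OF s]])
      thus "(E.D a1 has_real_derivative - h s * (\<bar>E.W a1 s\<bar> powr (p - 1) * E.W a1 s)) (at s within {0..c})"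
        using E.D_deriv[OF s, of a1] by simp
    qed
    have fin: "emden_sol p h {0..c} (E.W a1) (E.D a1) \<and> E.W a1 0 = 0 \<and> E.W a1 c = 0 \<and>
        (\<forall>s. 0 < s \<and> s < c \<longrightarrow> E.W a1 s > 0) \<and> E.D a1 0 > w0' 0"
      using sol E.W0[of a1] Wc posin E.D0[of a1] a1a0 unfolding a0_def by auto
    show "\<exists>w1 w1'. emden_sol p h {0..c} w1 w1' \<and>
           w1 0 = 0 \<and> w1 c = 0 \<and> (\<forall>s. 0 < s \<and> s < c \<longrightarrow> w1 s > 0) \<and>
           w1' 0 > w0' 0"
      by (rule exI[of _ "E.W a1"], rule exI[of _ "E.D a1"], rule fin)
  qed
qed


end
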